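(* Let $n\in\mathbb N$ and let $S$ be a well ordered subsemigroup of the nonnegative part $\{x\in\mathbb R^n\mid x\ge0\}$ of $\mathbb R^n$ with the lexicographic order. Suppose that $S$ has ordinal type $\le\omega^h$ for some $h\in\mathbb N$. Then $S$ has no accumulation point in $\mathbb R^n$ for the Euclidean topology.
   Context: $\omega$ denotes the ordinal type of $\mathbb N$. The lexicographic order on $\mathbb R^n$ compares first coordinates first. *)

theory Defs
  imports "HOL-Analysis.Analysis"
begin

text \<open>Lexicographic order on R^n, modelled as real ^ 'n where the index type 'n
  is finite and linearly ordered (its order gives the coordinate order:
  smaller indices are compared first).\<close>

definition lex_less :: "real ^ 'n::{finite,linorder} \<Rightarrow> real ^ 'n::{finite,linorder} \<Rightarrow> bool" where
  "lex_less x y \<longleftrightarrow> (\<exists>i. x $ i < y $ i \<and> (\<forall>j<i. x $ j = y $ j))"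

definition lex_le :: "real ^ 'n::{finite,linorder} \<Rightarrow> real ^ 'n::{finite,linorder} \<Rightarrow> bool" where
  "lex_le x y \<longleftrightarrow> x = y \<or> lex_less x y"

definition lex_rel :: "(real ^ 'n::{finite,linorder}) set \<Rightarrow> ((real ^ 'n::{finite,linorder}) \<times> (real ^ 'n::{finite,linorder})) set" where
  "lex_rel S = {(x, y). x \<in> S \<and> y \<in> S \<and> lex_le x y}"

text \<open>A canonical well order of ordinal type omega^h: N^h (lists of length h)
  with the lexicographic order (first coordinate most significant).\<close>
definition omega_pow :: "nat \<Rightarrow> (nat list \<times> nat list) set" where
  "omega_pow h = {(xs, ys). length xs = h \<and> length ys = h \<and>
      (xs = ys \<or> (\<exists>i<h. xs ! i < ys ! i \<and> (\<forall>j<i. xs ! j = ys ! j)))}"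

end

theory Submission
  imports Defs
begin


lemma lex_less_irrefl: "\<not> lex_less x x"
  by (auto simp: lex_less_def)

lemma lex_less_trans:
  assumes "lex_less x y" "lex_less y z" shows "lex_less x z"
proof -
  obtain p where p: "x$p < y$p" "\<forall>j<p. x$j = y$j" using assms(1) by (auto simp: lex_less_def)
  obtain q where q: "y$q < z$q" "\<forall>j<q. y$j = z$j" using assms(2) by (auto simp: lex_less_def)
  show ?thesis
  proof (cases p q rule: linorder_cases)
    case less
    have "x$p < z$p" using p(1) q(2) less by simp
    moreover have "\<forall>j<p. x$j = z$j" using p(2) q(2) less by simp
    ultimately show ?thesis unfolding lex_less_def by blast
  next
    case equal
    have "x$p < z$p" using p(1) q(1) equal by simp
    moreover have "\<forall>j<p. x$j = z$j" using p(2) q(2) equal by simp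
    ultimately show ?thesis unfolding lex_less_def by blast
  next
    case greater
    have "x$q < z$q" using p(2) q(1) greater by simp
    moreover have "\<forall>j<q. x$j = z$j" using p(2) q(2) greater by simp
    ultimately show ?thesis unfolding lex_less_def by blast
  qed
qed

lemma lex_less_total:
  assumes "x \<noteq> y" shows "lex_less x y \<or> lex_less y x"
proof -
  let ?D = "{j. x$j \<noteq> y$j}"
  have ne: "?D \<noteq> {}" using assms by (auto simp: vec_eq_iff)
  define i where "i = Min ?D"
  have i: "x$i \<noteq> y$i" using Min_in[OF _ ne] i_def by auto
  have b: "\<forall>j<i. x$j = y$j"
  proof (intro allI impI)
    fix j assume "j < i"
    show "x$j = y$j"
    proof (rule ccontr)
      assume "x$j \<noteq> y$j"
      then have "i \<le> j" using Min_le[of ?D j] i_def by auto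
      then show False using \<open>j < i\<close> by auto
    qed
  qed
  show ?thesis
  proof (cases "x$i < y$i")
    case True then show ?thesis using b unfolding lex_less_def by auto
  next
    case False then have "y$i < x$i" using i by auto
    then show ?thesis using b unfolding lex_less_def by (metis)
  qed
qed

lemma lex_less_add: "lex_less (x + z) (y + z) \<longleftrightarrow> lex_less x y"
  by (simp add: lex_less_def)

lemma lex_less_asym: "lex_less x y \<Longrightarrow> \<not> lex_less y x"
  using lex_less_trans lex_less_irrefl by blast

definition trunc :: "'n::{finite,linorder} \<Rightarrow> (real,'n) vec \<Rightarrow> (real,'n) vec" where
  "trunc i x = (\<chi> j. if j \<le> i then x$j else 0)"

lemma trunc_add: "trunc i (x + y) = trunc i x + trunc i y"
  by (simp add: trunc_def vec_eq_iff)

lemma trunc_diff: "trunc i (x - y) = trunc i x - trunc i y"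
  by (simp add: trunc_def vec_eq_iff)

lemma lex_less_trunc:
  assumes "lex_less (trunc i x) (trunc i y)" shows "lex_less x y"
proof -
  obtain q where q: "trunc i x $ q < trunc i y $ q" "\<forall>j<q. trunc i x$j = trunc i y$j"
    using assms by (auto simp: lex_less_def)
  have "q \<le> i" using q(1) by (auto simp: trunc_def split: if_splits)
  have "\<forall>j<q. x$j = y$j"
  proof (intro allI impI)
    fix j assume "j < q"
    then have "j \<le> i" using \<open>q \<le> i\<close> by auto
    then show "x$j = y$j" using q(2) \<open>j < q\<close> by (auto simp: trunc_def)
  qed
  moreover have "x$q < y$q" using q(1) \<open>q \<le> i\<close> by (auto simp: trunc_def)
  ultimately show ?thesis unfolding lex_less_def by blast
qed

definition agree :: "nat \<Rightarrow> nat list \<Rightarrow> nat list \<Rightarrow> bool" where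
  "agree p u v \<longleftrightarrow> (\<forall>j<p. u!j = v!j)"

definition lless :: "nat \<Rightarrow> nat list \<Rightarrow> nat list \<Rightarrow> bool" where
  "lless h u v \<longleftrightarrow> (\<exists>i<h. u!i < v!i \<and> (\<forall>j<i. u!j = v!j))"

lemma lless_interval:
  assumes "lless h u y" "lless h y v" "agree p u v" shows "agree p u y"
proof (rule ccontr)
  assume na: "\<not> agree p u y"
  obtain q where q: "q < h" "u!q < y!q" "\<forall>j<q. u!j = y!j" using assms(1) by (auto simp: lless_def)
  obtain q' where q': "q' < h" "y!q' < v!q'" "\<forall>j<q'. y!j = v!j" using assms(2) by (auto simp: lless_def)
  have "q < p"
  proof (rule ccontr)
    assume "\<not> q < p"
    then have "agree p u y" using q(3) unfolding agree_def by simp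
    then show False using na by simp
  qed
  then have uvq: "u!q = v!q" and uvj: "\<forall>j<q. u!j = v!j" using assms(3) by (auto simp: agree_def)
  show False
  proof (cases q' q rule: linorder_cases)
    case less
    then have "u!q' = y!q'" "u!q' = v!q'" using q(3) uvj by auto
    then show ?thesis using q'(2) by simp
  next
    case equal then show ?thesis using q(2) q'(2) uvq by simp
  next
    case greater then have "y!q = v!q" using q'(3) by simp
    then show ?thesis using q(2) uvq by simp
  qed
qed


fun Dp :: "(real,'n::{finite,linorder}) vec set \<Rightarrow> nat \<Rightarrow> (real,'n) vec \<Rightarrow> bool" where
  "Dp S 0 b = (b \<in> S)"
| "Dp S (Suc m) b = (b \<in> S \<and> (\<exists>c. (\<forall>k::nat. Dp S m (c k)) \<and> (\<forall>k. lex_less (c k) b) \<and>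
       (\<forall>x\<in>S. lex_less x b \<longrightarrow> (\<exists>k. lex_less x (c k)))))"

lemma Dp_in: "Dp S m b \<Longrightarrow> b \<in> S"
  by (cases m) auto

lemma coord_le:
  assumes "lless h u w" "agree L u w" shows "u!L \<le> w!L"
proof -
  obtain q where q: "q < h" "u!q < w!q" "\<forall>j<q. u!j = w!j" using assms(1) by (auto simp: lless_def)
  show ?thesis
  proof (cases q L rule: linorder_cases)
    case less then show ?thesis using assms(2) q(2) by (auto simp: agree_def)
  next
    case equal then show ?thesis using q(2) by simp
  next
    case greater then show ?thesis using q(3) by simp
  qed
qed

lemma lless_irrefl: "\<not> lless h u u"
  by (auto simp: lless_def)

lemma bounded_nondec:
  fixes v :: "nat \<Rightarrow> nat"
  assumes "\<forall>j. v j \<le> B" shows "\<exists>j. \<not> v j < v (Suc j)"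
proof (rule ccontr)
  assume "\<not> ?thesis"
  then have inc: "\<forall>j. v j < v (Suc j)" by simp
  have "\<forall>j. j \<le> v j"
  proof
    fix j show "j \<le> v j"
      by (induction j) (use inc in \<open>auto simp: Suc_le_eq intro: le_less_trans\<close>)
  qed
  then have "Suc B \<le> v (Suc B)" by blast
  then show False using assms by (metis not_less_eq_eq)
qed

lemma pair:
  assumes len: "\<forall>x\<in>S. length (f x) = h"
    and mono: "\<forall>x\<in>S. \<forall>y\<in>S. lex_less x y \<longrightarrow> lless h (f x) (f y)"
    and hm: "Suc m \<le> h" and D: "Dp S (Suc m) b" and xS: "x \<in> S" and xb: "lex_less x b"
    and H: "\<forall>y\<in>S. lex_less x y \<and> lex_less y b \<longrightarrow> agree (h - Suc m) (f y) (f b)"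
  shows "\<exists>t t'. Dp S m t \<and> Dp S m t' \<and> lex_less t t' \<and> lex_less x t \<and> lex_less t' b \<and>
     agree (Suc (h - Suc m)) (f t) (f t')"
proof -
  define L where "L = h - Suc m"
  have Lh: "L < h" using hm L_def by simp
  have bS: "b \<in> S" using D by simp
  obtain c where c1: "\<forall>k::nat. Dp S m (c k)" and c2: "\<forall>k. lex_less (c k) b"
    and c3: "\<forall>x\<in>S. lex_less x b \<longrightarrow> (\<exists>k. lex_less x (c k))" using D by auto
  define nxt where "nxt y = c (SOME k. lex_less y (c k))" for y
  have nxt: "lex_less y (nxt y) \<and> Dp S m (nxt y) \<and> lex_less (nxt y) b" if "y \<in> S" "lex_less y b" for y
  proof -
    have "\<exists>k. lex_less y (c k)" using c3 that by blast
    then have "lex_less y (nxt y)" unfolding nxt_def by (rule someI_ex)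
    then show ?thesis using c1 c2 nxt_def by auto
  qed
  define t where "t = rec_nat (nxt x) (\<lambda>_ y. nxt y)"
  have t0: "t 0 = nxt x" and tS: "t (Suc j) = nxt (t j)" for j by (simp_all add: t_def)
  have tprop: "Dp S m (t j) \<and> lex_less x (t j) \<and> lex_less (t j) b" for j
  proof (induction j)
    case 0 then show ?case using nxt[OF xS xb] t0 by simp
  next
    case (Suc j)
    have "t j \<in> S" using Suc Dp_in by blast
    then show ?case using nxt[of "t j"] Suc tS lex_less_trans by metis
  qed
  have tinc: "lex_less (t j) (t (Suc j))" for j
    using nxt[of "t j"] tprop[of j] Dp_in tS by metis
  have tin: "t j \<in> S" for j using tprop Dp_in by blast
  have ag: "agree L (f (t j)) (f b)" for j using H tprop tin L_def by blast
  have bnd: "f (t j) ! L \<le> f b ! L" for j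
    using coord_le[OF _ ag] mono tin bS tprop by blast
  obtain j where j: "\<not> f (t j) ! L < f (t (Suc j)) ! L"
    using bounded_nondec[of "\<lambda>j. f (t j) ! L" "f b ! L"] bnd by blast
  have ag2: "agree L (f (t j)) (f (t (Suc j)))" using ag[of j] ag[of "Suc j"] by (auto simp: agree_def)
  have "f (t j) ! L \<le> f (t (Suc j)) ! L"
    using coord_le[OF _ ag2] mono tin tinc by blast
  with j have "f (t j) ! L = f (t (Suc j)) ! L" by simp
  with ag2 have "agree (Suc L) (f (t j)) (f (t (Suc j)))" by (auto simp: agree_def less_Suc_eq)
  then show ?thesis using tprop[of j] tprop[of "Suc j"] tinc[of j] L_def by blast
qed

lemma OL:
  assumes len: "\<forall>x\<in>S. length (f x) = h"
    and mono: "\<forall>x\<in>S. \<forall>y\<in>S. lex_less x y \<longrightarrow> lless h (f x) (f y)"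
  shows "Suc m \<le> h \<Longrightarrow> Dp S (Suc m) b \<Longrightarrow> x \<in> S \<Longrightarrow> lex_less x b \<Longrightarrow>
    \<exists>y\<in>S. lex_less x y \<and> lex_less y b \<and> \<not> agree (h - Suc m) (f y) (f b)"
proof (induction m arbitrary: b x)
  case 0
  show ?case
  proof (rule ccontr)
    assume "\<not> ?case"
    then have H: "\<forall>y\<in>S. lex_less x y \<and> lex_less y b \<longrightarrow> agree (h - Suc 0) (f y) (f b)" by blast
    obtain t t' where tt: "Dp S 0 t" "Dp S 0 t'" "lex_less t t'"
      "agree (Suc (h - Suc 0)) (f t) (f t')"
      using pair[OF len mono 0(1) 0(2) 0(3) 0(4) H] by blast
    have "Suc (h - Suc 0) = h" using 0(1) by simp
    then have "f t = f t'" using tt len by (auto simp: agree_def intro: nth_equalityI)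
    moreover have "lless h (f t) (f t')" using mono tt by simp
    ultimately show False using lless_irrefl by metis
  qed
next
  case (Suc m)
  show ?case
  proof (rule ccontr)
    assume "\<not> ?case"
    then have H: "\<forall>y\<in>S. lex_less x y \<and> lex_less y b \<longrightarrow> agree (h - Suc (Suc m)) (f y) (f b)" by blast
    obtain t t' where tt: "Dp S (Suc m) t" "Dp S (Suc m) t'" "lex_less t t'"
      "agree (Suc (h - Suc (Suc m))) (f t) (f t')"
      using pair[OF len mono Suc(2) Suc(3) Suc(4) Suc(5) H] by blast
    have e: "Suc (h - Suc (Suc m)) = h - Suc m" using Suc(2) by simp
    have tS: "t \<in> S" "t' \<in> S" using tt Dp_in by blast+
    obtain y where y: "y \<in> S" "lex_less t y" "lex_less y t'" "\<not> agree (h - Suc m) (f y) (f t')"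
      using Suc.IH[of t' t] Suc(2) tt tS by auto
    have "agree (h - Suc m) (f t) (f y)"
      using lless_interval[of h "f t" "f y" "f t'"] mono y tS tt(4) e by simp
    then have "agree (h - Suc m) (f y) (f t')" using tt(4) e by (auto simp: agree_def)
    then show False using y(4) by simp
  qed
qed


lemma minex:
  assumes wo: "Well_order (lex_rel S)" and BS: "B \<subseteq> S" and ne: "B \<noteq> {}"
  shows "\<exists>z\<in>B. \<forall>y\<in>B. lex_le z y"
proof -
  have wf: "wf (lex_rel S - Id)" using wo by (simp add: well_order_on_def)
  obtain x where "x \<in> B" using ne by blast
  then obtain z where z: "z \<in> B" "\<forall>y. (y, z) \<in> lex_rel S - Id \<longrightarrow> y \<notin> B"
    using wf unfolding wf_eq_minimal by blast
  have "lex_le z y" if "y \<in> B" for y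
  proof (rule ccontr)
    assume n: "\<not> lex_le z y"
    then have "y \<noteq> z" by (auto simp: lex_le_def)
    then have "lex_less y z" using n lex_less_total unfolding lex_le_def by blast
    then have "(y, z) \<in> lex_rel S - Id" using BS that z(1) \<open>y \<noteq> z\<close>
      by (auto simp: lex_rel_def lex_le_def)
    then show False using z(2) that by blast
  qed
  then show ?thesis using z(1) by blast
qed

lemma pl_iff:
  "lex_less (trunc i u) (trunc i v) \<longleftrightarrow> (\<exists>q\<le>i. u$q < v$q \<and> (\<forall>j<q. u$j = v$j))"
proof
  assume "lex_less (trunc i u) (trunc i v)"
  then obtain q where q: "trunc i u $ q < trunc i v $ q" "\<forall>j<q. trunc i u$j = trunc i v$j"
    by (auto simp: lex_less_def)
  have qi: "q \<le> i" using q(1) by (auto simp: trunc_def split: if_splits)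
  have "\<forall>j<q. u$j = v$j"
  proof (intro allI impI)
    fix j assume "j < q"
    then have "j \<le> i" using qi by auto
    then show "u$j = v$j" using q(2) \<open>j < q\<close> by (auto simp: trunc_def)
  qed
  moreover have "u$q < v$q" using q(1) qi by (auto simp: trunc_def)
  ultimately show "\<exists>q\<le>i. u$q < v$q \<and> (\<forall>j<q. u$j = v$j)" using qi by blast
next
  assume "\<exists>q\<le>i. u$q < v$q \<and> (\<forall>j<q. u$j = v$j)"
  then obtain q where q: "q \<le> i" "u$q < v$q" "\<forall>j<q. u$j = v$j" by blast
  have "trunc i u $ q < trunc i v $ q" using q by (simp add: trunc_def)
  moreover have "\<forall>j<q. trunc i u $ j = trunc i v $ j" using q by (simp add: trunc_def)
  ultimately show "lex_less (trunc i u) (trunc i v)" unfolding lex_less_def by blast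
qed

lemma pl_add: "lex_less (trunc i (u + w)) (trunc i (v + w)) \<longleftrightarrow> lex_less (trunc i u) (trunc i v)"
  by (simp add: trunc_add lex_less_add)

lemma pl_mix:
  assumes "lex_less A B" "\<not> lex_less C B" shows "lex_less A C"
proof (cases "C = B")
  case True then show ?thesis using assms by simp
next
  case False then have "lex_less B C" using assms(2) lex_less_total by blast
  then show ?thesis using assms(1) lex_less_trans by blast
qed

lemma not_pl:
  assumes "\<forall>j<i. u$j = v$j" "v$i \<le> u$i" shows "\<not> lex_less (trunc i u) (trunc i v)"
proof
  assume "lex_less (trunc i u) (trunc i v)"
  then obtain q where q: "q \<le> i" "u$q < v$q" "\<forall>j<q. u$j = v$j" by (auto simp: pl_iff)
  show False
  proof (cases "q = i")
    case True then show ?thesis using q assms by simp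
  next
    case False then have "q < i" using q by simp
    then show ?thesis using q assms by simp
  qed
qed

definition Emin where
  "Emin S i t = (SOME e. e \<in> S \<and> \<not> lex_less (trunc i e) (trunc i t) \<and>
      (\<forall>y\<in>S. \<not> lex_less (trunc i y) (trunc i t) \<longrightarrow> lex_le e y))"

lemma Emin_spec:
  assumes wo: "Well_order (lex_rel S)" and ex: "\<exists>x\<in>S. \<not> lex_less (trunc i x) (trunc i t)"
  shows "Emin S i t \<in> S \<and> \<not> lex_less (trunc i (Emin S i t)) (trunc i t) \<and>
      (\<forall>y\<in>S. \<not> lex_less (trunc i y) (trunc i t) \<longrightarrow> lex_le (Emin S i t) y)"
proof -
  have "\<exists>z\<in>{x\<in>S. \<not> lex_less (trunc i x) (trunc i t)}. \<forall>y\<in>{x\<in>S. \<not> lex_less (trunc i x) (trunc i t)}. lex_le z y"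
    by (rule minex[OF wo]) (use ex in auto)
  then have "\<exists>e. e \<in> S \<and> \<not> lex_less (trunc i e) (trunc i t) \<and>
      (\<forall>y\<in>S. \<not> lex_less (trunc i y) (trunc i t) \<longrightarrow> lex_le e y)" by auto
  then show ?thesis unfolding Emin_def by (rule someI_ex)
qed

lemma mult_in:
  fixes S :: "(real,'n::{finite,linorder}) vec set"
  assumes sg: "\<forall>x\<in>S. \<forall>y\<in>S. x + y \<in> S" and y: "y \<in> S"
  shows "real (Suc m) *\<^sub>R y \<in> S"
proof (induction m)
  case 0 then show ?case using y by (simp add: scaleR_one)
next
  case (Suc m)
  have "real (Suc (Suc m)) *\<^sub>R y = y + real (Suc m) *\<^sub>R y" by (metis of_nat_Suc scaleR_add_left scaleR_one)
  then show ?case using sg y Suc by simp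
qed




definition pl :: "'n::{finite,linorder} \<Rightarrow> (real,'n) vec \<Rightarrow> (real,'n) vec \<Rightarrow> bool" where
  "pl i u v \<longleftrightarrow> lex_less (trunc i u) (trunc i v)"

lemma pl_iff': "pl i u v \<longleftrightarrow> (\<exists>q\<le>i. u$q < v$q \<and> (\<forall>j<q. u$j = v$j))"
  by (simp add: pl_def pl_iff)

lemma pl_add': "pl i (u + w) (v + w) \<longleftrightarrow> pl i u v"
  by (simp add: pl_def pl_add)

lemma pl_trans: "pl i u v \<Longrightarrow> pl i v w \<Longrightarrow> pl i u w"
  unfolding pl_def using lex_less_trans by blast

lemma pl_mix': "pl i A B \<Longrightarrow> \<not> pl i C B \<Longrightarrow> pl i A C"
  unfolding pl_def using pl_mix by blast

lemma pl_lex: "pl i u v \<Longrightarrow> lex_less u v"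
  unfolding pl_def using lex_less_trunc by blast

lemma scaleR_Suc: "real (Suc m) *\<^sub>R (a::(real,'n::{finite,linorder}) vec) = a + real m *\<^sub>R a"
  by (metis of_nat_Suc scaleR_add_left scaleR_one)



lemma K1:
  fixes s :: "nat \<Rightarrow> (real,'n::{finite,linorder}) vec"
  assumes sa: "\<forall>k. \<forall>j<i. s k $ j = a $ j"
    and lim: "(\<lambda>k. s k $ i) \<longlonglongrightarrow> a $ i" and pya: "pl i y a"
  shows "\<exists>k. pl i y (s k)"
proof -
  obtain q where q1: "q \<le> i" and q2: "y$q < a$q" and q3: "\<forall>j<q. y$j = a$j"
    using pya unfolding pl_iff' by blast
  show ?thesis
  proof (cases "q = i")
    case True
    have yi: "y$i < a$i" using q2 True by simp
    have "\<forall>\<^sub>F k in sequentially. y$i < s k $ i" using order_tendstoD(1)[OF lim yi] .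
    then obtain N where N: "\<forall>k\<ge>N. y$i < s k $ i" unfolding eventually_sequentially by blast
    have k: "y$i < s N $ i" using N by blast
    have "\<forall>j<i. y$j = s N $ j"
    proof (intro allI impI)
      fix j assume "j < i"
      then have "y$j = a$j" "s N $ j = a$j" using q3 True sa by blast+
      then show "y$j = s N $ j" by simp
    qed
    then have "pl i y (s N)" using k order_refl unfolding pl_iff' by blast
    then show ?thesis by blast
  next
    case False
    then have qi: "q < i" using q1 by simp
    have a1: "y$q < s 0 $ q" using q2 qi sa by simp
    have a2: "\<forall>j<q. y$j = s 0 $ j"
    proof (intro allI impI)
      fix j assume "j < q"
      then have "y$j = a$j" "s 0 $ j = a$j" using q3 qi sa by auto
      then show "y$j = s 0 $ j" by simp
    qed
    have "pl i y (s 0)" using a1 a2 q1 unfolding pl_iff' by blast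
    then show ?thesis by blast
  qed
qed


lemma sa_pl:
  fixes s :: "nat \<Rightarrow> (real,'n::{finite,linorder}) vec"
  assumes sa: "\<forall>k. \<forall>j<i. s k $ j = a $ j" and si: "\<forall>k. s k $ i < a $ i"
  shows "pl i (s k) a"
proof -
  have "s k $ i < a $ i" using si by blast
  moreover have "\<forall>j<i. s k $ j = a $ j" using sa by blast
  ultimately show ?thesis unfolding pl_iff' using order_refl by blast
qed

lemma K2a:
  fixes s :: "nat \<Rightarrow> (real,'n::{finite,linorder}) vec"
  assumes sa: "\<forall>k. \<forall>j<i. s k $ j = a $ j" and si: "\<forall>k. s k $ i < a $ i"
  shows "pl i (real (Suc m) *\<^sub>R s j) (real (Suc m) *\<^sub>R a)"
proof -
  have "s j $ i < a $ i" using si by blast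
  then have "(real (Suc m) *\<^sub>R s j) $ i < (real (Suc m) *\<^sub>R a) $ i"
    by (simp del: of_nat_Suc)
  moreover have "\<forall>j'<i. (real (Suc m) *\<^sub>R s j) $ j' = (real (Suc m) *\<^sub>R a) $ j'"
  proof (intro allI impI)
    fix j' assume "j' < i"
    then have "s j $ j' = a $ j'" using sa by blast
    then show "(real (Suc m) *\<^sub>R s j) $ j' = (real (Suc m) *\<^sub>R a) $ j'" by simp
  qed
  ultimately show ?thesis unfolding pl_iff' using order_refl by blast
qed

lemma K2b:
  fixes s :: "nat \<Rightarrow> (real,'n::{finite,linorder}) vec"
  assumes sa: "\<forall>k. \<forall>j<i. s k $ j = a $ j" and si: "\<forall>k. s k $ i < a $ i"
    and lim: "(\<lambda>k. s k $ i) \<longlonglongrightarrow> a $ i"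
  shows "\<exists>j. \<not> pl i (real (Suc m) *\<^sub>R s j) (s k + real m *\<^sub>R a)"
proof -
  have l2: "(\<lambda>j. real (Suc m) * s j $ i) \<longlonglongrightarrow> real (Suc m) * a $ i"
    by (rule tendsto_mult[OF tendsto_const lim])
  have ski: "s k $ i < a $ i" using si by blast
  have e: "real (Suc m) * a $ i = a $ i + real m * a $ i" by (simp add: algebra_simps)
  have "s k $ i + real m * a $ i < real (Suc m) * a $ i" using ski e by linarith
  then have "\<forall>\<^sub>F j in sequentially. s k $ i + real m * a $ i < real (Suc m) * s j $ i"
    by (rule order_tendstoD(1)[OF l2])
  then obtain N where "\<forall>j\<ge>N. s k $ i + real m * a $ i < real (Suc m) * s j $ i"
    unfolding eventually_sequentially by blast
  then have j: "s k $ i + real m * a $ i < real (Suc m) * s N $ i" by blast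
  have "\<forall>j'<i. (real (Suc m) *\<^sub>R s N) $ j' = (s k + real m *\<^sub>R a) $ j'"
  proof (intro allI impI)
    fix j' assume "j' < i"
    then have "s N $ j' = a $ j'" "s k $ j' = a $ j'" using sa by blast+
    then show "(real (Suc m) *\<^sub>R s N) $ j' = (s k + real m *\<^sub>R a) $ j'"
      by (simp add: algebra_simps)
  qed
  moreover have "(s k + real m *\<^sub>R a) $ i \<le> (real (Suc m) *\<^sub>R s N) $ i" using j by simp
  ultimately have "\<not> pl i (real (Suc m) *\<^sub>R s N) (s k + real m *\<^sub>R a)"
    using not_pl[of i "real (Suc m) *\<^sub>R s N" "s k + real m *\<^sub>R a"]
    unfolding pl_def by blast
  then show ?thesis by blast
qed



lemma construct:
  fixes S :: "(real,'n::{finite,linorder}) vec set" and s :: "nat \<Rightarrow> (real,'n) vec"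
  assumes sg: "\<forall>x\<in>S. \<forall>y\<in>S. x + y \<in> S" and wo: "Well_order (lex_rel S)"
    and sS: "\<forall>k. s k \<in> S" and sa: "\<forall>k. \<forall>j<i. s k $ j = a $ j" and si: "\<forall>k. s k $ i < a $ i"
    and lim: "(\<lambda>k. s k $ i) \<longlonglongrightarrow> a $ i"
  shows "\<forall>c\<in>S. (\<exists>x\<in>S. \<not> pl i x (c + real m *\<^sub>R a)) \<longrightarrow> Dp S m (Emin S i (c + real m *\<^sub>R a))"
proof -
  have K1: "\<exists>k. pl i y (s k)" if "pl i y a" for y using K1[OF sa lim that] .
  have sa_pl: "pl i (s k) a" for k by (rule sa_pl[OF sa si])
  have K2a: "pl i (real (Suc m) *\<^sub>R s j) (real (Suc m) *\<^sub>R a)" for j m by (rule K2a[OF sa si])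
  have K2b: "\<exists>j. \<not> pl i (real (Suc m) *\<^sub>R s j) (s k + real m *\<^sub>R a)" for k m by (rule K2b[OF sa si lim])
  show ?thesis
  proof (induction m)
    case 0
    show ?case
    proof (intro ballI impI)
      fix c assume c: "c \<in> S" "\<exists>x\<in>S. \<not> pl i x (c + real 0 *\<^sub>R a)"
      then show "Dp S 0 (Emin S i (c + real 0 *\<^sub>R a))"
        using Emin_spec[OF wo, of i "c + real 0 *\<^sub>R a"] by (simp add: pl_def)
    qed
  next
    case (Suc m)
    show ?case
    proof (intro ballI impI)
      fix c assume c: "c \<in> S" and ex: "\<exists>x\<in>S. \<not> pl i x (c + real (Suc m) *\<^sub>R a)"
      define t where "t = c + real (Suc m) *\<^sub>R a"
      define w where "w = c + real m *\<^sub>R a"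
      define b where "b = Emin S i t"
      define e where "e k = Emin S i (c + s k + real m *\<^sub>R a)" for k
      have tw: "t = a + w" unfolding t_def w_def scaleR_Suc by (simp add: algebra_simps)
      have skw: "c + s k + real m *\<^sub>R a = s k + w" for k unfolding w_def by (simp add: algebra_simps)
      have tk: "pl i (c + s k + real m *\<^sub>R a) t" for k
        unfolding skw tw pl_add' by (rule sa_pl)
      have bsp: "b \<in> S" "\<not> pl i b t" "\<forall>y\<in>S. \<not> pl i y t \<longrightarrow> lex_le b y"
        using Emin_spec[OF wo, of i t] ex unfolding b_def t_def pl_def by auto
      have exk: "\<exists>x\<in>S. \<not> pl i x (c + s k + real m *\<^sub>R a)" for k
      proof -
        obtain x where x: "x \<in> S" "\<not> pl i x t" using ex unfolding t_def by blast
        have "\<not> pl i x (c + s k + real m *\<^sub>R a)"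
        proof
          assume "pl i x (c + s k + real m *\<^sub>R a)"
          then have "pl i x t" using tk[of k] by (rule pl_trans)
          then show False using x(2) by simp
        qed
        then show ?thesis using x(1) by blast
      qed
      have csk: "c + s k \<in> S" for k using sg c sS by blast
      have eD: "Dp S m (e k)" for k
        using Suc.IH[rule_format, OF csk[of k] exk[of k]] unfolding e_def by simp
      have esp: "e k \<in> S" "\<not> pl i (e k) (c + s k + real m *\<^sub>R a)"
        "\<forall>y\<in>S. \<not> pl i y (c + s k + real m *\<^sub>R a) \<longrightarrow> lex_le (e k) y" for k
        using Emin_spec[OF wo, of i "c + s k + real m *\<^sub>R a"] exk[of k] unfolding e_def pl_def by auto
      have eb: "lex_less (e k) b" for k
      proof -
        obtain j where j: "\<not> pl i (real (Suc m) *\<^sub>R s j) (s k + real m *\<^sub>R a)" using K2b by blast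
        define z where "z = c + real (Suc m) *\<^sub>R s j"
        have zS: "z \<in> S" unfolding z_def using sg c mult_in[OF sg, of "s j" m] sS by blast
        have z1: "\<not> pl i z (c + s k + real m *\<^sub>R a)"
        proof -
          have e1: "z = real (Suc m) *\<^sub>R s j + c" unfolding z_def by (simp add: algebra_simps)
          have e2: "c + s k + real m *\<^sub>R a = (s k + real m *\<^sub>R a) + c" by (simp add: algebra_simps)
          show ?thesis unfolding e1 e2 pl_add' by (rule j)
        qed
        have z2: "pl i z t"
        proof -
          have e1: "z = real (Suc m) *\<^sub>R s j + c" unfolding z_def by (simp add: algebra_simps)
          have e2: "t = real (Suc m) *\<^sub>R a + c" unfolding t_def by (simp add: algebra_simps)
          show ?thesis unfolding e1 e2 pl_add' by (rule K2a)
        qed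
        have "lex_le (e k) z" using esp(3) zS z1 by blast
        moreover have "lex_less z b" using pl_lex[OF pl_mix'[OF z2 bsp(2)]] .
        ultimately show ?thesis unfolding lex_le_def using lex_less_trans by blast
      qed
      have cof: "\<exists>k. lex_less x (e k)" if "x \<in> S" "lex_less x b" for x
      proof -
        have "pl i x t"
        proof (rule ccontr)
          assume "\<not> pl i x t"
          then have "lex_le b x" using bsp(3) that(1) by blast
          then show False using that(2) lex_less_irrefl[of x] lex_less_asym[of x b] unfolding lex_le_def by auto
        qed
        then have "pl i (x - w + w) (a + w)" using tw by simp
        then have "pl i (x - w) a" using pl_add'[of i "x - w" w a] by simp
        then obtain k where "pl i (x - w) (s k)" using K1 by blast
        then have "pl i (x - w + w) (s k + w)" using pl_add'[of i "x - w" w "s k"] by simp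
        then have "pl i x (c + s k + real m *\<^sub>R a)" unfolding skw by simp
        then have "pl i x (e k)" using pl_mix' esp(2) by blast
        then show ?thesis using pl_lex by blast
      qed
      have "Dp S (Suc m) b"
        unfolding Dp.simps
      proof (intro conjI exI[of _ e])
        show "b \<in> S" by (rule bsp(1))
        show "\<forall>k. Dp S m (e k)" using eD by blast
        show "\<forall>k. lex_less (e k) b" using eb by blast
        show "\<forall>x\<in>S. lex_less x b \<longrightarrow> (\<exists>k. lex_less x (e k))" using cof by blast
      qed
      then show "Dp S (Suc m) (Emin S i (c + real (Suc m) *\<^sub>R a))"
        unfolding b_def t_def .
    qed
  qed
qed



lemma exist_top:
  fixes s :: "nat \<Rightarrow> (real,'n::{finite,linorder}) vec"
  assumes sa: "\<forall>k. \<forall>j<i. s k $ j = a $ j" and si: "\<forall>k. s k $ i < a $ i"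
    and lim: "(\<lambda>k. s k $ i) \<longlonglongrightarrow> a $ i"
    and q1: "q \<le> i" and q2: "0 < a$q" and q3: "\<forall>j<q. a$j = 0"
  shows "\<exists>k. pl i (real h *\<^sub>R a) (real (Suc h) *\<^sub>R s k)"
proof (cases "q = i")
  case True
  have l2: "(\<lambda>j. real (Suc h) * s j $ i) \<longlonglongrightarrow> real (Suc h) * a $ i"
    by (rule tendsto_mult[OF tendsto_const lim])
  have ai: "0 < a $ i" using q2 True by simp
  have "real h * a $ i < real (Suc h) * a $ i" using ai by (simp add: algebra_simps)
  then have "\<forall>\<^sub>F j in sequentially. real h * a $ i < real (Suc h) * s j $ i"
    by (rule order_tendstoD(1)[OF l2])
  then obtain N where "\<forall>j\<ge>N. real h * a $ i < real (Suc h) * s j $ i"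
    unfolding eventually_sequentially by blast
  then have j: "(real h *\<^sub>R a) $ i < (real (Suc h) *\<^sub>R s N) $ i" by simp
  have "\<forall>j'<i. (real h *\<^sub>R a) $ j' = (real (Suc h) *\<^sub>R s N) $ j'"
  proof (intro allI impI)
    fix j' assume "j' < i"
    then have "s N $ j' = a $ j'" "a $ j' = 0" using sa q3 True by blast+
    then show "(real h *\<^sub>R a) $ j' = (real (Suc h) *\<^sub>R s N) $ j'" by simp
  qed
  then have "pl i (real h *\<^sub>R a) (real (Suc h) *\<^sub>R s N)" using j unfolding pl_iff' using order_refl by blast
  then show ?thesis by blast
next
  case False
  then have qi: "q < i" using q1 by simp
  have sq: "s 0 $ q = a $ q" using sa qi by blast
  have j: "(real h *\<^sub>R a) $ q < (real (Suc h) *\<^sub>R s 0) $ q" using q2 sq by (simp add: algebra_simps)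
  have "\<forall>j'<q. (real h *\<^sub>R a) $ j' = (real (Suc h) *\<^sub>R s 0) $ j'"
  proof (intro allI impI)
    fix j' assume "j' < q"
    then have "s 0 $ j' = a $ j'" "a $ j' = 0" using sa q3 qi by auto
    then show "(real h *\<^sub>R a) $ j' = (real (Suc h) *\<^sub>R s 0) $ j'" by simp
  qed
  then have "pl i (real h *\<^sub>R a) (real (Suc h) *\<^sub>R s 0)" using j q1 unfolding pl_iff' by blast
  then show ?thesis by blast
qed

lemma pos_lemma:
  fixes s :: "nat \<Rightarrow> (real,'n::{finite,linorder}) vec"
  assumes sa: "\<forall>k. \<forall>j<i. s k $ j = a $ j" and si: "\<forall>k. s k $ i < a $ i"
    and nn: "lex_le 0 (s 0)"
  shows "\<exists>q\<le>i. 0 < a$q \<and> (\<forall>j<q. a$j = 0)"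
proof (cases "s 0 = 0")
  case True
  have "\<forall>j<i. a$j = 0" using sa True by (metis zero_index)
  moreover have "0 < a$i" using si True by (metis zero_index)
  ultimately show ?thesis by blast
next
  case False
  then have "lex_less 0 (s 0)" using nn by (simp add: lex_le_def)
  then obtain q' where q'1: "0 < s 0 $ q'" and q'2: "\<forall>j<q'. s 0 $ j = 0"
    unfolding lex_less_def by (metis zero_index)
  show ?thesis
  proof (cases "q' < i")
    case True
    have "0 < a$q'" using q'1 sa True by metis
    moreover have "\<forall>j<q'. a$j = 0" using q'2 sa True by (metis less_trans)
    ultimately show ?thesis using True by (intro exI[of _ q']) auto
  next
    case False
    have z: "\<forall>j<i. a$j = 0" using q'2 sa False by (metis less_le_trans not_less)
    have "0 \<le> s 0 $ i"
    proof (cases "i = q'")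
      case True then show ?thesis using q'1 by simp
    next
      case False' : False
      then have "i < q'" using False by simp
      then show ?thesis using q'2 by simp
    qed
    then have "0 < a$i" using si by (metis le_less_trans)
    then show ?thesis using z by blast
  qed
qed



theorem mainTheorem5:
  fixes S :: "(real ^ 'n::{finite,linorder}) set" and h :: nat
  assumes nonneg: "\<forall>x\<in>S. lex_le 0 x"
    and subsemigroup: "\<forall>x\<in>S. \<forall>y\<in>S. x + y \<in> S"
    and well_ordered: "Well_order (lex_rel S)"
    and ordtype: "(lex_rel S, omega_pow h) \<in> ordLeq"
  shows "\<not> (\<exists>a. a islimpt S)"
proof
  assume "\<exists>a. a islimpt S"
  then obtain a where la: "a islimpt S" by blast
  from ordtype obtain f where emb: "embed (lex_rel S) (omega_pow h) f"
    unfolding ordLeq_def by blast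
  have refl: "(x, x) \<in> lex_rel S" if "x \<in> S" for x using that by (simp add: lex_rel_def lex_le_def)
  have FS: "S \<subseteq> Field (lex_rel S)" using refl by (auto intro: FieldI1)
  have inj: "inj_on f S" using embed_inj_on[OF well_ordered emb] FS by (rule inj_on_subset)
  have cmp: "(f x, f y) \<in> omega_pow h" if "(x, y) \<in> lex_rel S" for x y
    using embed_compat[OF emb] that unfolding compat_def by blast
  have len: "\<forall>x\<in>S. length (f x) = h"
  proof
    fix x assume "x \<in> S"
    then have "(f x, f x) \<in> omega_pow h" using cmp refl by blast
    then show "length (f x) = h" by (simp add: omega_pow_def)
  qed
  have mono: "\<forall>x\<in>S. \<forall>y\<in>S. lex_less x y \<longrightarrow> lless h (f x) (f y)"
  proof (intro ballI impI)
    fix x y assume xy: "x \<in> S" "y \<in> S" "lex_less x y"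
    then have "(x, y) \<in> lex_rel S" by (simp add: lex_rel_def lex_le_def)
    then have o: "(f x, f y) \<in> omega_pow h" by (rule cmp)
    have "x \<noteq> y" using xy(3) lex_less_irrefl by blast
    then have "f x \<noteq> f y" using inj xy inj_on_def by metis
    then show "lless h (f x) (f y)" using o by (simp add: omega_pow_def lless_def)
  qed
  show False
  proof (cases h)
    case 0
    have "f ` S \<subseteq> {[]}" using len 0 by auto
    then have "finite (f ` S)" by (rule finite_subset) simp
    then have "finite S" using inj by (rule finite_imageD)
    then show False using la islimpt_finite by blast
  next
    case (Suc m0)
    obtain x where x1: "\<forall>n. x n \<in> S - {a}" and x2: "x \<longlonglongrightarrow> a"
      using la unfolding islimpt_sequential by blast
    define Jlt where "Jlt p = {n. x n $ p < a $ p \<and> (\<forall>j<p. x n $ j = a $ j)}" for p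
    define Jgt where "Jgt p = {n. a $ p < x n $ p \<and> (\<forall>j<p. x n $ j = a $ j)}" for p
    have cover: "n \<in> (\<Union>p. Jlt p \<union> Jgt p)" for n
    proof -
      have "x n \<noteq> a" using x1 by blast
      then have "lex_less (x n) a \<or> lex_less a (x n)" by (rule lex_less_total)
      then show ?thesis
      proof
        assume "lex_less (x n) a"
        then obtain p where "x n $ p < a $ p" "\<forall>j<p. x n $ j = a $ j" unfolding lex_less_def by blast
        then have "n \<in> Jlt p" unfolding Jlt_def by blast
        then show ?thesis by blast
      next
        assume "lex_less a (x n)"
        then obtain p where "a $ p < x n $ p" "\<forall>j<p. a $ j = x n $ j" unfolding lex_less_def by blast
        then have "n \<in> Jgt p" unfolding Jgt_def by simp
        then show ?thesis by blast
      qed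
    qed
    have "\<exists>p. infinite (Jlt p) \<or> infinite (Jgt p)"
    proof (rule ccontr)
      assume "\<not> ?thesis"
      then have "finite (\<Union>p. Jlt p \<union> Jgt p)" by auto
      moreover have "(UNIV :: nat set) \<subseteq> (\<Union>p. Jlt p \<union> Jgt p)" using cover by blast
      ultimately have "finite (UNIV :: nat set)" by (rule finite_subset[rotated])
      then show False by simp
    qed
    then obtain p where pinf: "infinite (Jlt p) \<or> infinite (Jgt p)" by blast
    have limp: "(\<lambda>n. x n $ p) \<longlonglongrightarrow> a $ p" using x2 by (rule tendsto_vec_nth)
    have ngt: "\<not> infinite (Jgt p)"
    proof
      assume inf: "infinite (Jgt p)"
      have BS: "x ` Jgt p \<subseteq> S" using x1 by blast
      have Bne: "x ` Jgt p \<noteq> {}" using inf by auto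
      obtain z where z: "z \<in> x ` Jgt p" "\<forall>y\<in>x ` Jgt p. lex_le z y"
        using minex[OF well_ordered BS Bne] by blast
      then obtain K where K: "K \<in> Jgt p" "z = x K" by blast
      have "a $ p < x K $ p" using K unfolding Jgt_def by blast
      then have "\<forall>\<^sub>F n in sequentially. x n $ p < x K $ p" by (rule order_tendstoD(2)[OF limp])
      then obtain N where N: "\<forall>n\<ge>N. x n $ p < x K $ p" unfolding eventually_sequentially by blast
      obtain n where n: "n \<ge> N" "n \<in> Jgt p" using inf unfolding infinite_nat_iff_unbounded_le by blast
      have "x n $ p < x K $ p" using N n by blast
      moreover have "\<forall>j<p. x n $ j = x K $ j" using n K unfolding Jgt_def by simp
      ultimately have "lex_less (x n) (x K)" unfolding lex_less_def by blast
      moreover have "lex_le (x K) (x n)" using z(2) K(2) n(2) by simp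
      ultimately show False using lex_less_irrefl lex_less_asym unfolding lex_le_def by metis
    qed
    then have "infinite (Jlt p)" using pinf by blast
    then obtain r :: "nat \<Rightarrow> nat" where r: "strict_mono r" "\<forall>n. r n \<in> Jlt p"
      using infinite_enumerate by blast
    define s where "s = x \<circ> r"
    have sS: "\<forall>k. s k \<in> S" using x1 unfolding s_def by simp
    have sa: "\<forall>k. \<forall>j<p. s k $ j = a $ j" using r(2) unfolding s_def Jlt_def by simp
    have si: "\<forall>k. s k $ p < a $ p" using r(2) unfolding s_def Jlt_def by simp
    have lims: "s \<longlonglongrightarrow> a" unfolding s_def by (rule LIMSEQ_subseq_LIMSEQ[OF x2 r(1)])
    have lim: "(\<lambda>k. s k $ p) \<longlonglongrightarrow> a $ p" using lims by (rule tendsto_vec_nth)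
    obtain q where q: "q \<le> p" "0 < a$q" "\<forall>j<q. a$j = 0"
      using pos_lemma[OF sa si] nonneg sS by blast
    obtain k where k: "pl p (real h *\<^sub>R a) (real (Suc h) *\<^sub>R s k)"
      using exist_top[OF sa si lim q] by blast
    define c where "c = s 0"
    have cS: "c \<in> S" using sS c_def by simp
    define y where "y = c + real (Suc h) *\<^sub>R s k"
    have yS: "y \<in> S" unfolding y_def using subsemigroup cS mult_in[OF subsemigroup, of "s k" h] sS by blast
    have "\<not> pl p y (c + real h *\<^sub>R a)"
    proof -
      have e1: "y = real (Suc h) *\<^sub>R s k + c" unfolding y_def by (simp add: algebra_simps)
      have e2: "c + real h *\<^sub>R a = real h *\<^sub>R a + c" by (simp add: algebra_simps)
      have "\<not> pl p (real (Suc h) *\<^sub>R s k) (real h *\<^sub>R a)"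
        using k lex_less_asym unfolding pl_def by blast
      then show ?thesis unfolding e1 e2 pl_add' .
    qed
    then have ex: "\<exists>y\<in>S. \<not> pl p y (c + real h *\<^sub>R a)" using yS by blast
    have D: "Dp S h (Emin S p (c + real h *\<^sub>R a))"
      using construct[OF subsemigroup well_ordered sS sa si lim, of h] cS ex by blast
    define b where "b = Emin S p (c + real h *\<^sub>R a)"
    have Db: "Dp S (Suc m0) b" using D Suc b_def by simp
    then obtain cc where cc1: "\<forall>k::nat. Dp S m0 (cc k)" and cc2: "\<forall>k. lex_less (cc k) b" by auto
    have cc0: "cc 0 \<in> S" using cc1 Dp_in by blast
    obtain yy where "\<not> agree (h - Suc m0) (f yy) (f b)"
      using OL[OF len mono, of m0 b "cc 0"] Suc Db cc0 cc2 by blast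
    then show False using Suc by (simp add: agree_def)
  qed
qed

end
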